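(* Let $\mathsf{k}$ be a field of characteristic zero, $S=\mathsf{k}[x_1,\dots,x_n]$ with $n\ge2$, $R=\mathsf{k}[X_1,\dots,X_n]$ with $S$ acting by differentiation, $F\in R$ nonzero homogeneous of degree $d\ge2$, $A=S/\operatorname{Ann}_S(F)$ and $\ell\in S_1$. Let $\mathbf d=(\dim_{\mathsf{k}}A^{(0)},\dim_{\mathsf{k}}A^{(1)},\dots,\dim_{\mathsf{k}}A^{(d)})$ and $\mathbf n=(n_0,\dots,n_d)=\Delta^2\mathbf d$. Then the Jordan type of $\ell$ on $A$ is $$P_{\ell,A}=\big(\underbrace{d+1,\dots,d+1}_{n_d},\underbrace{d,\dots,d}_{n_{d-1}},\dots,\underbrace{2,\dots,2}_{n_1},\underbrace{1,\dots,1}_{n_0}\big).$$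
   Context: $x_i$ acts as $\partial/\partial X_i$; $\operatorname{Ann}_S(G)=\{g\in S:g\circ G=0\}$. $A^{(i)}:=S/\operatorname{Ann}_S(\ell^i\circ F)$ for $0\le i\le d$ (the zero algebra if $\ell^i\circ F=0$); $\dim_{\mathsf{k}}A^{(i)}$ is its total $\mathsf{k}$-dimension, and $\dim_{\mathsf{k}}A^{(i)}:=0$ for $i>d$. $\Delta^2\mathbf d(i)=\dim_{\mathsf{k}}A^{(i)}+\dim_{\mathsf{k}}A^{(i+2)}-2\dim_{\mathsf{k}}A^{(i+1)}$. The Jordan type $P_{\ell,A}$ is the partition of $\dim_{\mathsf{k}}A$ given by the sizes of the Jordan blocks of the nilpotent multiplication map $\times\ell:A\to A$. *)

theory Defs
  imports Main "HOL-Library.Poly_Mapping" "HOL-Library.Multiset"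
begin

text \<open>The same carrier type serves both for S = k[x_0..x_{n-1}] and for
R = k[X_0..X_{n-1}].\<close>

type_synonym 'a mpoly = "(nat \<Rightarrow>\<^sub>0 nat) \<Rightarrow>\<^sub>0 'a"

definition poly_in :: "nat \<Rightarrow> ('a::zero) mpoly \<Rightarrow> bool" where
  "poly_in n p \<longleftrightarrow> (\<forall>m \<in> Poly_Mapping.keys p. Poly_Mapping.keys m \<subseteq> {..<n})"

definition polys :: "nat \<Rightarrow> ('a::zero) mpoly set" where
  "polys n = {p. poly_in n p}"

definition mdeg :: "(nat \<Rightarrow>\<^sub>0 nat) \<Rightarrow> nat" where
  "mdeg m = (\<Sum>i\<in>Poly_Mapping.keys m. Poly_Mapping.lookup m i)"

definition homogeneous :: "nat \<Rightarrow> ('a::zero) mpoly \<Rightarrow> bool" where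
  "homogeneous d p \<longleftrightarrow> (\<forall>m \<in> Poly_Mapping.keys p. mdeg m = d)"

definition smult_mp :: "'a::semiring_0 \<Rightarrow> 'a mpoly \<Rightarrow> 'a mpoly" where
  "smult_mp c p = Poly_Mapping.map (\<lambda>x. c * x) p"

text \<open>Differentiation action: the monomial x^a acts on X^b as
partial derivative, giving (b!/(b-a)!) X^(b-a) if a \<le> b, and 0 otherwise.\<close>

definition mon_le :: "(nat \<Rightarrow>\<^sub>0 nat) \<Rightarrow> (nat \<Rightarrow>\<^sub>0 nat) \<Rightarrow> bool" where
  "mon_le a b \<longleftrightarrow> (\<forall>i. Poly_Mapping.lookup a i \<le> Poly_Mapping.lookup b i)"

definition diff_coeff :: "(nat \<Rightarrow>\<^sub>0 nat) \<Rightarrow> (nat \<Rightarrow>\<^sub>0 nat) \<Rightarrow> 'a::semiring_1" where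
  "diff_coeff a b = of_nat (\<Prod>i\<in>Poly_Mapping.keys b. fact (Poly_Mapping.lookup b i) div fact (Poly_Mapping.lookup b i - Poly_Mapping.lookup a i))"

definition contract :: "('a::comm_semiring_1) mpoly \<Rightarrow> 'a mpoly \<Rightarrow> 'a mpoly" (infixr "\<circ>\<^sub>D" 70) where
  "g \<circ>\<^sub>D F = (\<Sum>a\<in>Poly_Mapping.keys g. \<Sum>b\<in>Poly_Mapping.keys F.
      if mon_le a b then Poly_Mapping.single (b - a) (Poly_Mapping.lookup g a * Poly_Mapping.lookup F b * diff_coeff a b) else 0)"

definition Ann :: "nat \<Rightarrow> ('a::comm_semiring_1) mpoly \<Rightarrow> 'a mpoly set" where
  "Ann n G = {g \<in> polys n. g \<circ>\<^sub>D G = 0}"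

definition basis_mod :: "('a::comm_ring_1) mpoly set \<Rightarrow> 'a mpoly set \<Rightarrow> ('i \<Rightarrow> 'a mpoly) \<Rightarrow> 'i set \<Rightarrow> bool" where
  "basis_mod S I B J \<longleftrightarrow> finite J \<and> B ` J \<subseteq> S \<and>
     (\<forall>c. (\<Sum>j\<in>J. smult_mp (c j) (B j)) \<in> I \<longrightarrow> (\<forall>j\<in>J. c j = 0)) \<and>
     (\<forall>p\<in>S. \<exists>c. p - (\<Sum>j\<in>J. smult_mp (c j) (B j)) \<in> I)"

definition qdim :: "('a::comm_ring_1) mpoly set \<Rightarrow> 'a mpoly set \<Rightarrow> nat" where
  "qdim S I = (THE m. \<exists>B :: nat \<Rightarrow> 'a mpoly. basis_mod S I B {..<m})"

text \<open>dim_k A^(i), A^(i) = S / Ann_S(l^i \<circ> F); zero for i > d.\<close>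

definition dimA :: "nat \<Rightarrow> nat \<Rightarrow> ('a::comm_ring_1) mpoly \<Rightarrow> 'a mpoly \<Rightarrow> nat \<Rightarrow> nat" where
  "dimA n d F l i = (if i \<le> d then qdim (polys n) (Ann n ((l ^ i) \<circ>\<^sub>D F)) else 0)"

text \<open>Jordan type of multiplication by l on S/I: the multiset of sizes of the
Jordan blocks, i.e. of the strings v, l v, ..., l^(k-1) v (with l^k v = 0 in S/I)
in a Jordan basis of S/I.\<close>

definition jordan_type :: "('a::comm_ring_1) mpoly set \<Rightarrow> 'a mpoly set \<Rightarrow> 'a mpoly \<Rightarrow> nat multiset" where
  "jordan_type S I l = (THE P. \<exists>js :: ('a mpoly \<times> nat) list.
       P = mset (map snd js) \<and>
       (\<forall>(v, k) \<in> set js. 1 \<le> k \<and> l ^ k * v \<in> I) \<and>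
       basis_mod S I (\<lambda>(j, t). l ^ t * fst (js ! j)) {(j, t). j < length js \<and> t < snd (js ! j)})"

end

theory Submission
  imports Defs "HOL.Vector_Spaces"
begin

context vector_space begin

definition fam_indep :: "('i \<Rightarrow> 'b) \<Rightarrow> 'i set \<Rightarrow> bool" where
  "fam_indep f J \<longleftrightarrow> (\<forall>c. (\<Sum>j\<in>J. c j *s f j) = 0 \<longrightarrow> (\<forall>j\<in>J. c j = 0))"

definition fbasis :: "'b set \<Rightarrow> ('i \<Rightarrow> 'b) \<Rightarrow> 'i set \<Rightarrow> bool" where
  "fbasis W f J \<longleftrightarrow> finite J \<and> f ` J \<subseteq> W \<and> fam_indep f J \<and> W \<subseteq> span (f ` J)"

lemma fam_indepD:
  "fam_indep f J \<Longrightarrow> (\<Sum>j\<in>J. c j *s f j) = 0 \<Longrightarrow> j \<in> J \<Longrightarrow> c j = 0"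
  unfolding fam_indep_def by blast

lemma fam_indep_inj:
  assumes "finite J" "fam_indep f J"
  shows "inj_on f J"
proof (rule inj_onI, rule ccontr)
  fix i j assume ij: "i \<in> J" "j \<in> J" "f i = f j" "i \<noteq> j"
  define c where "c k = (if k = i then 1 else if k = j then -1 else (0::'a))" for k
  have "(\<Sum>k\<in>J. c k *s f k) = (\<Sum>k\<in>{i,j}. c k *s f k)"
    by (rule sum.mono_neutral_right) (use assms(1) ij(1,2) in \<open>auto simp: c_def\<close>)
  also have "\<dots> = c i *s f i + c j *s f j" using ij(4) by simp
  also have "\<dots> = 0" using ij(4) by (simp add: c_def ij(3))
  finally have "(\<Sum>k\<in>J. c k *s f k) = 0" .
  hence "c i = 0" using fam_indepD[OF assms(2)] ij by blast
  thus False by (simp add: c_def)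
qed

lemma fam_indep_independent:
  assumes "finite J" "fam_indep f J"
  shows "independent (f ` J)"
proof (rule independent_if_scalars_zero)
  show "finite (f ` J)" using assms by simp
  fix u x assume s: "(\<Sum>x\<in>f ` J. u x *s x) = 0" and x: "x \<in> f ` J"
  have inj: "inj_on f J" using fam_indep_inj assms by blast
  have "(\<Sum>j\<in>J. u (f j) *s f j) = 0" using s by (simp add: sum.reindex[OF inj])
  hence "\<forall>j\<in>J. u (f j) = 0" using fam_indepD[OF assms(2), of "\<lambda>j. u (f j)"] by blast
  thus "u x = 0" using x by blast
qed

lemma independent_fam_indep:
  assumes "finite J" "inj_on f J" "independent (f ` J)"
  shows "fam_indep f J"
  unfolding fam_indep_def
proof (intro allI impI ballI)
  fix c j assume s: "(\<Sum>j\<in>J. c j *s f j) = 0" and j: "j \<in> J"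
  define u where "u v = c (the_inv_into J f v)" for v
  have "(\<Sum>v\<in>f ` J. u v *s v) = (\<Sum>j\<in>J. u (f j) *s f j)" by (simp add: sum.reindex[OF assms(2)])
  also have "\<dots> = (\<Sum>j\<in>J. c j *s f j)"
    by (rule sum.cong) (auto simp: u_def the_inv_into_f_f[OF assms(2)])
  finally have "(\<Sum>v\<in>f ` J. u v *s v) = 0" using s by simp
  hence "u (f j) = 0" using independentD[OF assms(3) _ subset_refl] assms(1) j by blast
  thus "c j = 0" by (simp add: u_def the_inv_into_f_f[OF assms(2) j])
qed

lemma span_fam_coeffs:
  assumes "finite J" "inj_on f J" "y \<in> span (f ` J)"
  shows "\<exists>c. y = (\<Sum>j\<in>J. c j *s f j)"
proof -
  from assms(3) obtain u where "y = (\<Sum>v\<in>f ` J. u v *s v)"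
    using span_finite[of "f ` J"] assms(1) by auto
  hence "y = (\<Sum>j\<in>J. u (f j) *s f j)" by (simp add: sum.reindex[OF assms(2)])
  thus ?thesis by (rule exI[of _ "\<lambda>j. u (f j)"])
qed

lemma fbasis_dim:
  assumes "fbasis W f J"
  shows "dim W = card J"
proof -
  have fin: "finite J" and ind: "fam_indep f J" using assms unfolding fbasis_def by auto
  have inj: "inj_on f J" using fam_indep_inj fin ind by blast
  have "dim W = card (f ` J)"
    by (rule dim_unique) (use assms fam_indep_independent[OF fin ind] in \<open>auto simp: fbasis_def\<close>)
  thus ?thesis using card_image[OF inj] by simp
qed

lemma fbasis_cong:
  assumes "fbasis W f J" "\<And>j. j \<in> J \<Longrightarrow> f j = g j"
  shows "fbasis W g J"
proof -
  have im: "f ` J = g ` J" using assms(2) by (rule image_cong[OF refl])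
  have sm: "(\<Sum>j\<in>J. c j *s f j) = (\<Sum>j\<in>J. c j *s g j)" for c
    using assms(2) by (intro sum.cong) auto
  show ?thesis using assms(1) unfolding fbasis_def fam_indep_def im sm by blast
qed

lemma fam_indep_nonzero:
  assumes "fam_indep f J" "finite J" "j \<in> J"
  shows "f j \<noteq> 0"
proof
  assume z: "f j = 0"
  define c where "c k = (if k = j then 1 else (0::'a))" for k
  have "(\<Sum>k\<in>J. c k *s f k) = 0" by (rule sum.neutral) (auto simp: c_def z)
  hence "c j = 0" using assms fam_indepD[OF assms(1), of c] by blast
  thus False by (simp add: c_def)
qed

lemma fam_indep_subset:
  assumes "fam_indep f J" "finite J" "I \<subseteq> J"
  shows "fam_indep f I"
  unfolding fam_indep_def
proof (intro allI impI ballI)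
  fix c i assume s: "(\<Sum>j\<in>I. c j *s f j) = 0" and i: "i \<in> I"
  define c' where "c' j = (if j \<in> I then c j else 0)" for j
  have "(\<Sum>j\<in>J. c' j *s f j) = (\<Sum>j\<in>I. c j *s f j)"
    using assms by (intro sum.mono_neutral_cong_right) (auto simp: c'_def)
  hence "c' i = 0" using s assms i fam_indepD[OF assms(1), of c'] by auto
  thus "c i = 0" using i by (simp add: c'_def)
qed

end


locale nilp = vector_space scale for scale :: "'a::field \<Rightarrow> 'b::ab_group_add \<Rightarrow> 'b" (infixr "*s" 75) +
  fixes L :: "'b \<Rightarrow> 'b"
  assumes L_add: "L (x + y) = L x + L y" and L_scale: "L (c *s x) = c *s L x"
begin

lemma Lk_add: "(L^^k) (x + y) = (L^^k) x + (L^^k) y"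
  by (induction k) (simp_all add: L_add)

lemma Lk_scale: "(L^^k) (c *s x) = c *s (L^^k) x"
  by (induction k) (simp_all add: L_scale)

lemma homk: "module_hom scale scale (L^^k)"
proof -
  have "module scale" by (metis module_iff_vector_space vector_space_axioms)
  thus ?thesis by (simp add: module_hom_iff Lk_add Lk_scale)
qed

lemma homL: "module_hom scale scale L"
  using homk[of 1] by simp

lemma Lk_sum: "(L^^k) (sum g S) = (\<Sum>a\<in>S. (L^^k) (g a))"
  by (rule module_hom.sum[OF homk])

lemma L_sum: "L (sum g S) = (\<Sum>a\<in>S. L (g a))"
  by (rule module_hom.sum[OF homL])

lemma Lk_zero[simp]: "(L^^k) 0 = 0"
  by (rule module_hom.zero[OF homk])

lemma L_zero[simp]: "L 0 = 0"
  by (rule module_hom.zero[OF homL])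

lemma L_diff: "L (x - y) = L x - L y"
  by (rule module_hom.diff[OF homL])

lemma Lk_W: "L ` W \<subseteq> W \<Longrightarrow> x \<in> W \<Longrightarrow> (L^^k) x \<in> W"
  by (induction k) auto

lemma Lk_vanish: "(L^^k) v = 0 \<Longrightarrow> k \<le> m \<Longrightarrow> (L^^m) v = 0"
proof -
  assume "(L^^k) v = 0" "k \<le> m"
  hence "(L^^m) v = (L^^((m-k)+k)) v" by simp
  also have "\<dots> = (L^^(m-k)) ((L^^k) v)" by (simp add: funpow_add)
  finally show ?thesis using \<open>(L^^k) v = 0\<close> by simp
qed

definition idx :: "('b \<times> nat) list \<Rightarrow> (nat \<times> nat) set" where
  "idx js = (SIGMA j:{..<length js}. {..<snd (js!j)})"

definition fam :: "('b \<times> nat) list \<Rightarrow> nat \<times> nat \<Rightarrow> 'b" where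
  "fam js = (\<lambda>(j,t). (L^^t) (fst (js!j)))"

definition jstr :: "'b set \<Rightarrow> ('b \<times> nat) list \<Rightarrow> bool" where
  "jstr W js \<longleftrightarrow> (\<forall>(v,k)\<in>set js. 1 \<le> k \<and> (L^^k) v = 0) \<and> fbasis W (fam js) (idx js)"

lemma idx_mem: "(j,t) \<in> idx js \<longleftrightarrow> j < length js \<and> t < snd (js!j)"
  by (simp add: idx_def)

lemma fam_app: "fam js (j,t) = (L^^t) (fst (js!j))"
  by (simp add: fam_def)

lemma finite_idx: "finite (idx js)"
  by (simp add: idx_def)

lemma jstr_kill: "jstr W js \<Longrightarrow> j < length js \<Longrightarrow> 1 \<le> snd (js!j) \<and> (L^^(snd (js!j))) (fst (js!j)) = 0"
proof -
  assume a: "jstr W js" "j < length js"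
  have m: "js!j \<in> set js" using a by simp
  obtain v k where e: "js!j = (v,k)" by force
  show ?thesis using a(1) m unfolding jstr_def e by auto
qed

lemma jstr_rank:
  assumes "jstr W js"
  shows "dim ((L^^i) ` W) = (\<Sum>j<length js. snd (js!j) - i)"
proof -
  define I where "I = (SIGMA j:{..<length js}. {i..<snd (js!j)})"
  have fb: "fbasis W (fam js) (idx js)" using assms by (simp add: jstr_def)
  have I_sub: "I \<subseteq> idx js" by (auto simp: I_def idx_def)
  have "fbasis ((L^^i) ` W) (fam js) I"
    unfolding fbasis_def
  proof (intro conjI)
    show "finite I" by (simp add: I_def)
    show "fam_indep (fam js) I"
      using fam_indep_subset[OF _ finite_idx I_sub] fb by (simp add: fbasis_def)
    show "fam js ` I \<subseteq> (L^^i) ` W"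
    proof
      fix x assume "x \<in> fam js ` I"
      then obtain j t where jt: "j < length js" "i \<le> t" "t < snd (js!j)" "x = fam js (j,t)"
        by (auto simp: I_def)
      have "(j, t - i) \<in> idx js" using jt by (simp add: idx_mem)
      hence "fam js (j, t - i) \<in> W" using fb by (auto simp: fbasis_def)
      moreover have "x = (L^^i) (fam js (j, t - i))"
      proof -
        have "x = (L^^(i + (t-i))) (fst (js!j))" using jt by (simp add: fam_app)
        thus ?thesis by (simp add: fam_app funpow_add)
      qed
      ultimately show "x \<in> (L^^i) ` W" by blast
    qed
    have sub: "(L^^i) ` (fam js ` idx js) \<subseteq> span (fam js ` I)"
    proof
      fix y assume "y \<in> (L^^i) ` (fam js ` idx js)"
      then obtain j t where jt: "j < length js" "t < snd (js!j)" "y = (L^^i) (fam js (j,t))"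
        by (auto simp: idx_def)
      have y: "y = (L^^(i+t)) (fst (js!j))"
        using jt by (simp add: fam_app funpow_add)
      show "y \<in> span (fam js ` I)"
      proof (cases "i + t < snd (js!j)")
        case True
        hence "(j, i+t) \<in> I" using jt by (simp add: I_def)
        moreover have "y = fam js (j, i+t)" using y by (simp add: fam_app)
        ultimately show ?thesis by (blast intro: span_base)
      next
        case False
        hence "y = 0" using y Lk_vanish[of "snd (js!j)" "fst (js!j)" "i+t"] jstr_kill[OF assms jt(1)] by simp
        thus ?thesis by (simp add: span_zero)
      qed
    qed
    have "W \<subseteq> span (fam js ` idx js)" using fb by (simp add: fbasis_def)
    hence "(L^^i) ` W \<subseteq> span ((L^^i) ` (fam js ` idx js))"
      by (rule module_hom.spans_image[OF homk])
    also have "\<dots> \<subseteq> span (fam js ` I)"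
      using sub by (simp add: span_minimal)
    finally show "(L^^i) ` W \<subseteq> span (fam js ` I)" .
  qed
  hence "dim ((L^^i) ` W) = card I" by (rule fbasis_dim)
  also have "card I = (\<Sum>j<length js. snd (js!j) - i)"
    by (simp add: I_def)
  finally show ?thesis .
qed

lemma count_mset_nth: "count (mset xs) m = (\<Sum>j<length xs. if xs!j = m then 1 else 0)"
  by (induction xs) (simp_all del: sum.lessThan_Suc add: sum.lessThan_Suc_shift)

lemma jstr_mset:
  assumes js: "jstr W js" and nil: "\<forall>x\<in>W. (L^^(Suc d)) x = 0"
  defines "M \<equiv> mset (map snd js)"
  shows "(\<forall>i. int (dim ((L^^i) ` W)) + int (dim ((L^^(i+2)) ` W)) - 2 * int (dim ((L^^(i+1)) ` W))
            = int (count M (i+1)))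
         \<and> M = (\<Sum>i\<in>{0..d}. replicate_mset (count M (i+1)) (i+1))"
proof (intro conjI allI)
  fix i
  have r: "int (dim ((L^^i) ` W)) = (\<Sum>j<length js. int (snd(js!j) - i))" for i
    by (simp only: jstr_rank[OF js] of_nat_sum)
  have "int (dim ((L^^i) ` W)) + int (dim ((L^^(i+2)) ` W)) - 2 * int (dim ((L^^(i+1)) ` W))
     = (\<Sum>j<length js. int (snd (js!j) - i) + int (snd (js!j) - (i+2)) - 2 * int (snd (js!j) - (i+1)))"
    unfolding r[of i] r[of "i+2"] r[of "i+1"] by (simp add: sum.distrib sum_subtractf sum_distrib_left)
  also have "\<dots> = (\<Sum>j<length js. if snd (js!j) = i+1 then 1 else 0)"
    by (rule sum.cong) auto
  also have "\<dots> = int (count M (i+1))"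
  proof -
    have "count M (i+1) = (\<Sum>j<length js. if snd (js!j) = i+1 then 1 else 0)"
      unfolding M_def count_mset_nth length_map by (intro sum.cong) auto
    thus ?thesis by (simp add: of_nat_sum) (rule sum.cong, auto)
  qed
  finally show "int (dim ((L^^i) ` W)) + int (dim ((L^^(i+2)) ` W)) - 2 * int (dim ((L^^(i+1)) ` W))
            = int (count M (i+1))" .
next
  have fb: "fbasis W (fam js) (idx js)" using js by (simp add: jstr_def)
  have rng: "1 \<le> x \<and> x \<le> Suc d" if "x \<in># M" for x
  proof -
    from that obtain j where j: "j < length js" "x = snd (js!j)"
      by (auto simp: M_def in_set_conv_nth)
    have "1 \<le> x" using jstr_kill[OF js j(1)] j by simp
    moreover have "x \<le> Suc d"
    proof (rule ccontr)
      assume "\<not> x \<le> Suc d"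
      hence "(j, Suc d) \<in> idx js" "(j, 0) \<in> idx js" using j by (auto simp: idx_mem)
      hence "fam js (j, Suc d) \<noteq> 0" "fam js (j,0) \<in> W"
        using fb fam_indep_nonzero[of "fam js" "idx js"] finite_idx by (auto simp: fbasis_def)
      thus False using nil by (simp add: fam_app)
    qed
    ultimately show ?thesis by simp
  qed
  show "M = (\<Sum>i\<in>{0..d}. replicate_mset (count M (i+1)) (i+1))"
  proof (rule multiset_eqI)
    fix x
    have "count (\<Sum>i\<in>{0..d}. replicate_mset (count M (i+1)) (i+1)) x
        = (\<Sum>i\<in>{0..d}. if i = x - 1 \<and> 1 \<le> x then count M x else 0)"
      by (simp add: count_sum) (rule sum.cong, auto)
    also have "\<dots> = count M x"
    proof (cases "1 \<le> x \<and> x \<le> Suc d")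
      case True thus ?thesis by (simp add: sum.delta) arith
    next
      case False
      hence "count M x = 0" using rng by (meson count_inI)
      thus ?thesis using False by (auto intro!: sum.neutral)
    qed
    finally show "count M x = count (\<Sum>i\<in>{0..d}. replicate_mset (count M (i+1)) (i+1)) x" by simp
  qed
qed

lemma jstr_exists:
  "subspace W \<Longrightarrow> L ` W \<subseteq> W \<Longrightarrow> finite T \<Longrightarrow> W \<subseteq> span T \<Longrightarrow> \<forall>x\<in>W. (L^^m) x = 0
   \<Longrightarrow> \<exists>js. jstr W js"
proof (induction m arbitrary: W T)
  case 0
  hence W0: "W \<subseteq> {0}" by auto
  have "jstr W []"
    unfolding jstr_def fbasis_def fam_indep_def using W0 by (auto simp: idx_def)
  thus ?case by blast
next
  case (Suc m)
  note sW = Suc.prems(1) and inv = Suc.prems(2) and finT = Suc.prems(3) and WT = Suc.prems(4)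
    and nilW = Suc.prems(5)
  define U where "U = L ` W"
  have sU: "subspace U" unfolding U_def by (rule module_hom.subspace_image[OF homL sW])
  have invU: "L ` U \<subseteq> U" using inv by (auto simp: U_def)
  have UT: "U \<subseteq> span (L ` T)" unfolding U_def by (rule module_hom.spans_image[OF homL WT])
  have nilU: "\<forall>x\<in>U. (L^^m) x = 0"
  proof
    fix x assume "x \<in> U"
    then obtain y where y: "y \<in> W" "x = L y" by (auto simp: U_def)
    have "(L^^m) (L y) = (L^^(Suc m)) y" by (simp add: funpow_swap1)
    thus "(L^^m) x = 0" using nilW y by simp
  qed
  obtain js0 where js0: "jstr U js0" using Suc.IH[OF sU invU _ UT nilU] finT by blast
  define p where "p = length js0"
  define u where "u j = fst (js0!j)" for j
  define k where "k j = snd (js0!j)" for j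
  have fb0: "fbasis U (fam js0) (idx js0)" using js0 by (simp add: jstr_def)
  have k1: "1 \<le> k j" and uk: "(L^^(k j)) (u j) = 0" if "j < p" for j
    using jstr_kill[OF js0] that by (auto simp: p_def k_def u_def)
  have uU: "u j \<in> U" if "j < p" for j
  proof -
    have "(j,0) \<in> idx js0" using k1[OF that] that by (simp add: idx_mem p_def k_def)
    thus ?thesis using fb0 by (auto simp: fbasis_def fam_app u_def)
  qed
  have "\<forall>j. \<exists>x. j < p \<longrightarrow> x \<in> W \<and> L x = u j"
  proof
    fix j show "\<exists>x. j < p \<longrightarrow> x \<in> W \<and> L x = u j"
    proof (cases "j < p")
      case True
      obtain x where "x \<in> W" "u j = L x" using uU[OF True] unfolding U_def by (rule imageE)
      thus ?thesis by auto
    qed simp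
  qed
  from choice[OF this] obtain w where w0: "\<forall>j. j < p \<longrightarrow> w j \<in> W \<and> L (w j) = u j" by blast
  have w: "w j \<in> W \<and> L (w j) = u j" if "j < p" for j using w0 that by blast
  define K where "K = {x\<in>W. L x = 0}"
  define y where "y j = (L^^(k j)) (w j)" for j
  have y_fam: "y j = fam js0 (j, k j - 1)" if "j < p" for j
  proof -
    have "y j = (L^^(k j - 1 + 1)) (w j)" using k1[OF that] by (simp add: y_def)
    also have "\<dots> = (L^^(k j - 1)) (L (w j))" by (simp only: funpow_add) simp
    finally show ?thesis using w[OF that] by (simp add: fam_app u_def)
  qed
  define Iy where "Iy = (\<lambda>j. (j, k j - 1)) ` {..<p}"
  have Iy_sub: "Iy \<subseteq> idx js0" using k1 by (force simp: Iy_def idx_mem p_def k_def)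
  define Y where "Y = y ` {..<p}"
  have Y_eq: "Y = fam js0 ` Iy" using y_fam by (auto simp: Y_def Iy_def image_image)
  have inj0: "inj_on (fam js0) (idx js0)"
    using fam_indep_inj fb0 finite_idx by (auto simp: fbasis_def)
  have ind0: "independent (fam js0 ` idx js0)"
    using fam_indep_independent fb0 finite_idx by (auto simp: fbasis_def)
  have indY: "independent Y" unfolding Y_eq by (rule independent_mono[OF ind0 image_mono[OF Iy_sub]])
  have yW: "y j \<in> W" if "j < p" for j using Lk_W[OF inv] w[OF that] by (simp add: y_def)
  have Ly: "L (y j) = 0" if "j < p" for j
  proof -
    have "L (y j) = (L^^(k j)) (L (w j))" by (simp add: y_def funpow_swap1)
    thus ?thesis using w[OF that] uk[OF that] by simp
  qed
  have YK: "Y \<subseteq> K" using yW Ly by (auto simp: Y_def K_def)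
  obtain B where B: "Y \<subseteq> B" "B \<subseteq> K" "independent B" "K \<subseteq> span B"
    using maximal_independent_subset_extend[OF YK indY] by blast
  have BW: "B \<subseteq> W" using B(2) by (auto simp: K_def)
  have finB: "finite B" using independent_span_bound[OF finT B(3)] BW WT by blast
  obtain zs where zs: "set zs = B - Y" "distinct zs" using finite_distinct_list[of "B - Y"] finB by blast
  define q where "q = length zs"
  define js where "js = map (\<lambda>j. (w j, Suc (k j))) [0..<p] @ map (\<lambda>z. (z, 1::nat)) zs"
  have len: "length js = p + q" by (simp add: js_def q_def)
  have js_lo: "js!j = (w j, Suc (k j))" if "j < p" for j
    using that by (simp add: js_def nth_append)
  have js_hi: "js!j = (zs!(j-p), 1)" if "p \<le> j" "j < p + q" for j
    using that by (simp add: js_def nth_append q_def)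
  have fam_lo: "fam js (j,t) = (L^^t) (w j)" if "j < p" for j t
    using js_lo[OF that] by (simp add: fam_app)
  have fam_hi: "fam js (j,t) = (L^^t) (zs!(j-p))" if "p \<le> j" "j < p + q" for j t
    using js_hi[OF that] by (simp add: fam_app)
  have idx_js: "(j,t) \<in> idx js \<longleftrightarrow> (j < p \<and> t \<le> k j) \<or> (p \<le> j \<and> j < p + q \<and> t = 0)" for j t
    by (cases "j < p") (auto simp: idx_mem len js_lo js_hi)
  have idx0: "(j,t) \<in> idx js0 \<longleftrightarrow> j < p \<and> t < k j" for j t
    by (simp add: idx_mem p_def k_def)
  have IU_sub: "idx js0 \<subseteq> idx js" using idx0 idx_js by auto
  have zsB: "zs!i \<in> B" "zs!i \<notin> Y" if "i < q" for i using zs that nth_mem[of i zs] by (auto simp: q_def)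
  have zsK: "zs!i \<in> K" if "i < q" for i using zsB[OF that] B(2) by auto
  have Lfam: "L (fam js ij) = (if ij \<in> idx js0 then fam js0 ij else 0)" if "ij \<in> idx js" for ij
  proof -
    obtain j t where ij: "ij = (j,t)" by force
    show ?thesis
    proof (cases "j < p")
      case True
      have "L (fam js ij) = (L^^t) (L (w j))" by (simp add: ij fam_lo[OF True] funpow_swap1)
      also have "\<dots> = (L^^t) (u j)" using w[OF True] by simp
      finally have e: "L (fam js ij) = (L^^t) (u j)" .
      show ?thesis
      proof (cases "t < k j")
        case True
        thus ?thesis using e \<open>j < p\<close> by (simp add: ij idx0 fam_app u_def)
      next
        case False
        hence "t = k j" using that ij idx_js \<open>j < p\<close> by auto
        thus ?thesis using e uk[OF \<open>j < p\<close>] by (simp add: ij idx0)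
      qed
    next
      case False
      hence jt: "p \<le> j" "j < p + q" "t = 0" using that ij idx_js by auto
      have "L (fam js ij) = L (zs!(j-p))" using fam_hi[OF jt(1,2)] jt(3) ij by simp
      also have "\<dots> = 0" using zsK[of "j-p"] jt by (auto simp: K_def)
      finally show ?thesis using False by (simp add: ij idx0)
    qed
  qed
  have L_comb: "L (\<Sum>ij\<in>idx js. c ij *s fam js ij) = (\<Sum>ij\<in>idx js0. c ij *s fam js0 ij)" for c
  proof -
    have "L (\<Sum>ij\<in>idx js. c ij *s fam js ij) = (\<Sum>ij\<in>idx js. c ij *s L (fam js ij))"
      by (simp add: L_sum L_scale)
    also have "\<dots> = (\<Sum>ij\<in>idx js0. c ij *s fam js0 ij)"
      by (rule sum.mono_neutral_cong_right) (use finite_idx IU_sub Lfam in auto)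
    finally show ?thesis .
  qed
  have L_comb0: "L (\<Sum>ij\<in>idx js0. c ij *s fam js ij) = (\<Sum>ij\<in>idx js0. c ij *s fam js0 ij)" for c
  proof -
    have "L (\<Sum>ij\<in>idx js0. c ij *s fam js ij) = (\<Sum>ij\<in>idx js0. c ij *s L (fam js ij))"
      by (simp add: L_sum L_scale)
    also have "\<dots> = (\<Sum>ij\<in>idx js0. c ij *s fam js0 ij)"
      by (rule sum.cong) (use IU_sub Lfam in auto)
    finally show ?thesis .
  qed
  have famW: "fam js ij \<in> W" if "ij \<in> idx js" for ij
  proof -
    obtain j t where ij: "ij = (j,t)" by force
    show ?thesis
    proof (cases "j < p")
      case True thus ?thesis using Lk_W[OF inv] w[OF True] by (simp add: ij fam_lo)
    next
      case False
      hence jt: "p \<le> j" "j < p + q" "t = 0" using that ij idx_js by auto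
      thus ?thesis using fam_hi[OF jt(1,2)] zsB[of "j-p"] BW ij by auto
    qed
  qed
  define R where "R = idx js - idx js0"
  have R_mem: "(j,t) \<in> R \<longleftrightarrow> (j < p \<and> t = k j) \<or> (p \<le> j \<and> j < p + q \<and> t = 0)" for j t
    unfolding R_def using idx_js idx0 by auto
  have famR_Y: "fam js (j, k j) = y j" if "j < p" for j using that by (simp add: fam_lo y_def)
  have famR_B: "fam js ` R \<subseteq> B"
  proof
    fix b assume "b \<in> fam js ` R"
    then obtain j t where jt: "(j,t) \<in> R" "b = fam js (j,t)" by auto
    show "b \<in> B"
    proof (cases "j < p")
      case True
      hence "b = y j" using jt R_mem famR_Y by auto
      thus ?thesis using B(1) True by (auto simp: Y_def)
    next
      case False
      hence "p \<le> j" "j < p + q" "t = 0" using jt R_mem by auto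
      thus ?thesis using jt fam_hi zsB[of "j-p"] by auto
    qed
  qed
  have injR: "inj_on (fam js) R"
  proof (rule inj_onI)
    fix a b assume a: "a \<in> R" and b: "b \<in> R" and e: "fam js a = fam js b"
    obtain j1 t1 j2 t2 where ab: "a = (j1,t1)" "b = (j2,t2)" by force
    consider "j1 < p" "j2 < p" | "j1 < p" "\<not> j2 < p" | "\<not> j1 < p" "j2 < p" | "\<not> j1 < p" "\<not> j2 < p" by blast
    thus "a = b"
    proof cases
      case 1
      hence t: "t1 = k j1" "t2 = k j2" using a b ab R_mem by auto
      have "fam js0 (j1, k j1 - 1) = fam js0 (j2, k j2 - 1)"
        using e 1 t ab famR_Y y_fam by auto
      moreover have "(j1, k j1 - 1) \<in> idx js0" "(j2, k j2 - 1) \<in> idx js0"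
        using 1 k1 idx0 by force+
      ultimately have "j1 = j2" using inj0 by (auto dest: inj_onD)
      thus ?thesis using ab t by simp
    next
      case 2
      hence h: "p \<le> j2" "j2 < p + q" "t2 = 0" "t1 = k j1" using b ab a R_mem by auto
      have "y j1 = zs!(j2-p)" using e ab h famR_Y[OF 2(1)] fam_hi[OF h(1,2)] by simp
      moreover have "y j1 \<in> Y" using 2 by (simp add: Y_def)
      ultimately show ?thesis using zsB[of "j2-p"] h by auto
    next
      case 3
      hence h: "p \<le> j1" "j1 < p + q" "t1 = 0" "t2 = k j2" using b ab a R_mem by auto
      have "y j2 = zs!(j1-p)" using e ab h famR_Y[OF 3(2)] fam_hi[OF h(1,2)] by simp
      moreover have "y j2 \<in> Y" using 3 by (simp add: Y_def)
      ultimately show ?thesis using zsB[of "j1-p"] h by auto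
    next
      case 4
      hence h: "p \<le> j1" "j1 < p + q" "t1 = 0" "p \<le> j2" "j2 < p + q" "t2 = 0"
        using b ab a R_mem by auto
      have "zs!(j1-p) = zs!(j2-p)" using e ab h fam_hi by simp
      hence "j1 - p = j2 - p" using zs(2) h by (simp add: nth_eq_iff_index_eq q_def)
      thus ?thesis using h ab by simp
    qed
  qed
  have indR: "fam_indep (fam js) R"
    by (rule independent_fam_indep) (use finite_idx injR independent_mono[OF B(3) famR_B] in \<open>auto simp: R_def\<close>)
  have "fbasis W (fam js) (idx js)"
    unfolding fbasis_def
  proof (intro conjI)
    show "finite (idx js)" by (rule finite_idx)
    show "fam js ` idx js \<subseteq> W" using famW by auto
    show "fam_indep (fam js) (idx js)"
      unfolding fam_indep_def
    proof (intro allI impI)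
      fix c assume s: "(\<Sum>ij\<in>idx js. c ij *s fam js ij) = 0"
      have "(\<Sum>ij\<in>idx js0. c ij *s fam js0 ij) = 0" using L_comb[of c] s by simp
      hence c0: "c ij = 0" if "ij \<in> idx js0" for ij
        using fam_indepD[of "fam js0" "idx js0" c ij] fb0 that by (auto simp: fbasis_def)
      have "(\<Sum>ij\<in>idx js. c ij *s fam js ij) = (\<Sum>ij\<in>R. c ij *s fam js ij) + (\<Sum>ij\<in>idx js0. c ij *s fam js ij)"
        unfolding R_def by (rule sum.subset_diff[OF IU_sub finite_idx])
      also have "(\<Sum>ij\<in>idx js0. c ij *s fam js ij) = 0" using c0 by (simp add: sum.neutral)
      finally have "(\<Sum>ij\<in>R. c ij *s fam js ij) = 0" using s by simp
      hence cR: "c ij = 0" if "ij \<in> R" for ij using fam_indepD[OF indR] that by blast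
      show "\<forall>ij\<in>idx js. c ij = 0" using c0 cR by (auto simp: R_def)
    qed
    show "W \<subseteq> span (fam js ` idx js)"
    proof
      fix x assume x: "x \<in> W"
      have "L x \<in> span (fam js0 ` idx js0)" using x fb0 by (auto simp: fbasis_def U_def)
      then obtain c where c: "L x = (\<Sum>ij\<in>idx js0. c ij *s fam js0 ij)"
        using span_fam_coeffs[OF finite_idx inj0] by blast
      define s where "s = (\<Sum>ij\<in>idx js0. c ij *s fam js ij)"
      have sInW: "s \<in> W" unfolding s_def
        by (rule subspace_sum[OF sW]) (use famW IU_sub subspace_scale[OF sW] in blast)
      have Ls: "L s = L x" using L_comb0[of c] c by (simp add: s_def)
      have "x - s \<in> K" using subspace_diff[OF sW x sInW] Ls by (simp add: K_def L_diff)
      hence "x - s \<in> span B" using B(4) by blast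
      moreover have "B \<subseteq> fam js ` idx js"
      proof
        fix b assume b: "b \<in> B"
        show "b \<in> fam js ` idx js"
        proof (cases "b \<in> Y")
          case True
          then obtain j where j: "j < p" "b = y j" by (auto simp: Y_def)
          hence "(j, k j) \<in> idx js" by (simp add: idx_js)
          thus ?thesis using j famR_Y by force
        next
          case False
          hence "b \<in> set zs" using zs b by simp
          then obtain i where i: "i < q" "b = zs!i" by (auto simp: in_set_conv_nth q_def)
          hence "(p+i, 0) \<in> idx js" by (simp add: idx_js)
          moreover have "fam js (p+i, 0) = b" using fam_hi[of "p+i" 0] i by simp
          ultimately show ?thesis by force
        qed
      qed
      ultimately have "x - s \<in> span (fam js ` idx js)" using span_mono by blast
      moreover have "s \<in> span (fam js ` idx js)" unfolding s_def
        by (rule span_sum, rule span_scale, rule span_base) (use IU_sub in auto)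
      ultimately have "s + (x - s) \<in> span (fam js ` idx js)" by (rule span_add[rotated])
      thus "x \<in> span (fam js ` idx js)" by simp
    qed
  qed
  moreover have "\<forall>(v,kk)\<in>set js. 1 \<le> kk \<and> (L^^kk) v = 0"
  proof
    fix vk assume "vk \<in> set js"
    then obtain j where j: "j < p + q" "vk = js!j" by (auto simp: in_set_conv_nth len)
    show "case vk of (v, kk) \<Rightarrow> 1 \<le> kk \<and> (L^^kk) v = 0"
    proof (cases "j < p")
      case True
      have "(L^^(Suc (k j))) (w j) = (L^^(k j)) (L (w j))" by (simp add: funpow_swap1)
      thus ?thesis using j True js_lo w uk by simp
    next
      case False
      thus ?thesis using j js_hi[of j] zsK[of "j-p"] by (auto simp: K_def)
    qed
  qed
  ultimately show ?case unfolding jstr_def by blast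
qed

end

lemma smult_mp_eq: "smult_mp c p = Poly_Mapping.single 0 c * p"
  unfolding smult_mp_def mult_map_scale_conv_mult[symmetric] by (simp add: comp_def)

lemma single0_mult: "Poly_Mapping.single 0 (a * b) = Poly_Mapping.single 0 a * (Poly_Mapping.single 0 b :: 'a::comm_semiring_1 mpoly)"
  by (simp add: mult_single)

interpretation mp: vector_space "smult_mp :: 'a::field \<Rightarrow> 'a mpoly \<Rightarrow> 'a mpoly"
  by unfold_locales (simp_all add: smult_mp_eq algebra_simps single_add single0_mult)

section \<open>Contraction\<close>

definition cterm :: "('a::comm_semiring_1) mpoly \<Rightarrow> 'a mpoly \<Rightarrow> (nat \<Rightarrow>\<^sub>0 nat) \<Rightarrow> (nat \<Rightarrow>\<^sub>0 nat) \<Rightarrow> 'a mpoly" where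
  "cterm g F a b = (if mon_le a b then Poly_Mapping.single (b - a) (Poly_Mapping.lookup g a * Poly_Mapping.lookup F b * diff_coeff a b) else 0)"

lemma contract_cterm: "g \<circ>\<^sub>D F = (\<Sum>a\<in>Poly_Mapping.keys g. \<Sum>b\<in>Poly_Mapping.keys F. cterm g F a b)"
  unfolding contract_def cterm_def ..

lemma contract_superset:
  assumes "finite A" "Poly_Mapping.keys g \<subseteq> A" "finite B" "Poly_Mapping.keys F \<subseteq> B"
  shows "g \<circ>\<^sub>D F = (\<Sum>a\<in>A. \<Sum>b\<in>B. cterm g F a b)"
proof -
  have z1: "cterm g F a b = 0" if "a \<notin> Poly_Mapping.keys g" for a b
    using that by (simp add: cterm_def not_in_keys_iff_lookup_eq_zero)
  have z2: "cterm g F a b = 0" if "b \<notin> Poly_Mapping.keys F" for a b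
    using that by (simp add: cterm_def not_in_keys_iff_lookup_eq_zero)
  have "g \<circ>\<^sub>D F = (\<Sum>a\<in>Poly_Mapping.keys g. \<Sum>b\<in>B. cterm g F a b)"
    unfolding contract_cterm
    by (rule sum.cong[OF refl], rule sum.mono_neutral_right[symmetric]) (use assms z2 in auto)
  also have "\<dots> = (\<Sum>a\<in>A. \<Sum>b\<in>B. cterm g F a b)"
    by (rule sum.mono_neutral_right[symmetric]) (use assms z1 in auto)
  finally show ?thesis .
qed

lemma contract_add_left: "((g1 + g2) \<circ>\<^sub>D F) = g1 \<circ>\<^sub>D F + g2 \<circ>\<^sub>D (F :: ('a::comm_semiring_1) mpoly)"
proof -
  let ?A = "Poly_Mapping.keys g1 \<union> Poly_Mapping.keys g2" and ?B = "Poly_Mapping.keys F"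
  have "cterm (g1 + g2) F a b = cterm g1 F a b + cterm g2 F a b" for a b
    by (simp add: cterm_def lookup_add distrib_right single_add)
  moreover have "(g1 + g2) \<circ>\<^sub>D F = (\<Sum>a\<in>?A. \<Sum>b\<in>?B. cterm (g1 + g2) F a b)"
    by (rule contract_superset) (use Poly_Mapping.keys_add[of g1 g2] in auto)
  moreover have "g1 \<circ>\<^sub>D F = (\<Sum>a\<in>?A. \<Sum>b\<in>?B. cterm g1 F a b)"
    by (rule contract_superset) auto
  moreover have "g2 \<circ>\<^sub>D F = (\<Sum>a\<in>?A. \<Sum>b\<in>?B. cterm g2 F a b)"
    by (rule contract_superset) auto
  ultimately show ?thesis by (simp add: sum.distrib)
qed

lemma contract_add_right: "g \<circ>\<^sub>D (F1 + F2) = g \<circ>\<^sub>D F1 + g \<circ>\<^sub>D (F2 :: ('a::comm_semiring_1) mpoly)"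
proof -
  let ?B = "Poly_Mapping.keys F1 \<union> Poly_Mapping.keys F2" and ?A = "Poly_Mapping.keys g"
  have "cterm g (F1 + F2) a b = cterm g F1 a b + cterm g F2 a b" for a b
    by (simp add: cterm_def lookup_add distrib_right distrib_left single_add)
  moreover have "g \<circ>\<^sub>D (F1 + F2) = (\<Sum>a\<in>?A. \<Sum>b\<in>?B. cterm g (F1 + F2) a b)"
    by (rule contract_superset) (use Poly_Mapping.keys_add[of F1 F2] in auto)
  moreover have "g \<circ>\<^sub>D F1 = (\<Sum>a\<in>?A. \<Sum>b\<in>?B. cterm g F1 a b)"
    by (rule contract_superset) auto
  moreover have "g \<circ>\<^sub>D F2 = (\<Sum>a\<in>?A. \<Sum>b\<in>?B. cterm g F2 a b)"
    by (rule contract_superset) auto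
  ultimately show ?thesis by (simp add: sum.distrib)
qed

lemma contract_zero_left[simp]: "0 \<circ>\<^sub>D F = 0"
  by (simp add: contract_def)

lemma contract_zero_right[simp]: "g \<circ>\<^sub>D 0 = 0"
  by (simp add: contract_def)

lemma contract_sum_left: "(sum f I) \<circ>\<^sub>D (F :: ('a::comm_semiring_1) mpoly) = (\<Sum>i\<in>I. f i \<circ>\<^sub>D F)"
  by (induction I rule: infinite_finite_induct) (simp_all add: contract_add_left)

lemma contract_sum_right: "g \<circ>\<^sub>D (sum f I) = (\<Sum>i\<in>I. g \<circ>\<^sub>D (f i :: ('a::comm_semiring_1) mpoly))"
  by (induction I rule: infinite_finite_induct) (simp_all add: contract_add_right)

lemma contract_single:
  "Poly_Mapping.single a x \<circ>\<^sub>D Poly_Mapping.single b y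
   = (if mon_le a b then Poly_Mapping.single (b - a) (x * y * diff_coeff a b) else (0 :: ('a::comm_semiring_1) mpoly))"
proof -
  have "Poly_Mapping.single a x \<circ>\<^sub>D Poly_Mapping.single b y
     = (\<Sum>a'\<in>{a}. \<Sum>b'\<in>{b}. cterm (Poly_Mapping.single a x) (Poly_Mapping.single b y) a' b')"
    by (rule contract_superset) auto
  thus ?thesis by (simp add: cterm_def)
qed

lemma poly_decomp: "(\<Sum>k\<in>Poly_Mapping.keys p. Poly_Mapping.single k (Poly_Mapping.lookup p k)) = p"
  by (rule poly_mapping_eqI)
     (auto simp: lookup_sum lookup_single when_def sum.delta not_in_keys_iff_lookup_eq_zero)

lemma lookup_minus_nat: "Poly_Mapping.lookup (m - b) i = Poly_Mapping.lookup m i - Poly_Mapping.lookup (b :: nat \<Rightarrow>\<^sub>0 nat) i"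
  by (simp add: minus_poly_mapping.rep_eq)

lemma mon_le_add: "mon_le b m \<Longrightarrow> mon_le (a + b) m \<longleftrightarrow> mon_le a (m - b)"
  unfolding mon_le_def by (auto simp: lookup_add lookup_minus_nat) (metis le_diff_conv2)+

lemma mon_le_add2: "mon_le (a + b) m \<Longrightarrow> mon_le b m"
  unfolding mon_le_def by (auto simp: lookup_add) (metis add_leE)

lemma minus_add_nat: "m - (a + b) = m - b - (a :: nat \<Rightarrow>\<^sub>0 nat)"
  by (rule poly_mapping_eqI) (simp add: lookup_minus_nat lookup_add)

definition dcn :: "(nat \<Rightarrow>\<^sub>0 nat) \<Rightarrow> (nat \<Rightarrow>\<^sub>0 nat) \<Rightarrow> nat" where
  "dcn a b = (\<Prod>i\<in>Poly_Mapping.keys b. fact (Poly_Mapping.lookup b i) div fact (Poly_Mapping.lookup b i - Poly_Mapping.lookup a i))"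

lemma diff_coeff_dcn: "diff_coeff a b = of_nat (dcn a b)"
  by (simp add: diff_coeff_def dcn_def)

lemma dcn_superset:
  assumes "finite K" "Poly_Mapping.keys b \<subseteq> K"
  shows "dcn a b = (\<Prod>i\<in>K. fact (Poly_Mapping.lookup b i) div fact (Poly_Mapping.lookup b i - Poly_Mapping.lookup a i))"
  unfolding dcn_def
  by (rule prod.mono_neutral_right[symmetric]) (use assms in \<open>auto simp: not_in_keys_iff_lookup_eq_zero\<close>)

lemma fact_div_split:
  assumes "z \<le> y" "y \<le> x"
  shows "fact x div fact z = (fact x div fact y) * (fact y div (fact z :: nat))"
proof -
  have d1: "(fact y :: nat) dvd fact x" by (rule fact_dvd[OF assms(2)])
  then obtain P :: nat where P: "fact x = fact y * P" by (rule dvdE)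
  have d2: "(fact z :: nat) dvd fact y" by (rule fact_dvd[OF assms(1)])
  then obtain Q :: nat where Q: "fact y = fact z * Q" by (rule dvdE)
  have "fact x div fact y = P" using P by simp
  moreover have "fact y div fact z = Q" using Q by simp
  moreover have "fact x div fact z = Q * P" using P Q by (simp add: mult.assoc)
  ultimately show ?thesis by simp
qed

lemma dcn_add:
  assumes "mon_le (a + b) m"
  shows "dcn (a + b) m = dcn b m * dcn a (m - b)"
proof -
  let ?K = "Poly_Mapping.keys m"
  have sub: "Poly_Mapping.keys (m - b) \<subseteq> ?K"
    by (auto simp: in_keys_iff lookup_minus_nat)
  have "dcn (a + b) m = (\<Prod>i\<in>?K. fact (Poly_Mapping.lookup m i) div fact (Poly_Mapping.lookup m i - Poly_Mapping.lookup (a+b) i))"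
    by (rule dcn_superset) auto
  also have "\<dots> = (\<Prod>i\<in>?K. (fact (Poly_Mapping.lookup m i) div fact (Poly_Mapping.lookup m i - Poly_Mapping.lookup b i))
     * (fact (Poly_Mapping.lookup (m - b) i) div fact (Poly_Mapping.lookup (m - b) i - Poly_Mapping.lookup a i)))"
  proof (rule prod.cong[OF refl])
    fix i
    define mi where "mi = Poly_Mapping.lookup m i"
    define ai where "ai = Poly_Mapping.lookup a i"
    define bi where "bi = Poly_Mapping.lookup b i"
    have le: "ai + bi \<le> mi"
      using assms by (simp add: mon_le_def lookup_add ai_def bi_def mi_def)
    have h1: "mi - (ai + bi) \<le> mi - bi" and h2: "mi - bi \<le> mi" by arith+
    have e1: "Poly_Mapping.lookup (a+b) i = ai + bi" by (simp add: lookup_add ai_def bi_def)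
    have e2: "Poly_Mapping.lookup (m - b) i = mi - bi" by (simp add: lookup_minus_nat mi_def bi_def)
    have e3: "mi - bi - ai = mi - (ai + bi)" by arith
    show "(fact (Poly_Mapping.lookup m i) :: nat) div fact (Poly_Mapping.lookup m i - Poly_Mapping.lookup (a+b) i)
      = (fact (Poly_Mapping.lookup m i) div fact (Poly_Mapping.lookup m i - Poly_Mapping.lookup b i))
     * (fact (Poly_Mapping.lookup (m - b) i) div fact (Poly_Mapping.lookup (m - b) i - Poly_Mapping.lookup a i))"
      unfolding e1 e2 mi_def[symmetric] ai_def[symmetric] bi_def[symmetric] e3
      using fact_div_split[OF h1 h2] by simp
  qed
  also have "\<dots> = dcn b m * dcn a (m - b)"
  proof -
    have "dcn a (m - b) = (\<Prod>i\<in>?K. fact (Poly_Mapping.lookup (m - b) i) div fact (Poly_Mapping.lookup (m - b) i - Poly_Mapping.lookup a i))"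
      by (rule dcn_superset[OF _ sub]) simp
    thus ?thesis unfolding dcn_def[of b m] by (simp only: prod.distrib)
  qed
  finally show ?thesis .
qed

lemma contract_single_assoc:
  "Poly_Mapping.single (a + b) (x * y) \<circ>\<^sub>D Poly_Mapping.single m z
   = Poly_Mapping.single a x \<circ>\<^sub>D (Poly_Mapping.single b y \<circ>\<^sub>D (Poly_Mapping.single m (z :: 'a::comm_semiring_1)))"
proof (cases "mon_le b m")
  case False
  hence "\<not> mon_le (a + b) m" using mon_le_add2 by blast
  thus ?thesis using False by (simp add: contract_single)
next
  case True
  show ?thesis
  proof (cases "mon_le (a + b) m")
    case True2: True
    have "dcn (a + b) m = dcn b m * dcn a (m - b)" by (rule dcn_add[OF True2])
    thus ?thesis using True True2 mon_le_add[OF True]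
      by (simp add: contract_single minus_add_nat diff_coeff_dcn ac_simps)
  next
    case False
    thus ?thesis using True mon_le_add[OF True] by (simp add: contract_single)
  qed
qed

lemma contract_assoc: "(g * h) \<circ>\<^sub>D F = g \<circ>\<^sub>D (h \<circ>\<^sub>D (F :: ('a::comm_semiring_1) mpoly))"
proof -
  let ?s = "\<lambda>p k. Poly_Mapping.single k (Poly_Mapping.lookup p k)"
  have eg: "g = (\<Sum>a\<in>Poly_Mapping.keys g. ?s g a)" by (rule poly_decomp[symmetric])
  have eh: "h = (\<Sum>b\<in>Poly_Mapping.keys h. ?s h b)" by (rule poly_decomp[symmetric])
  have eF: "F = (\<Sum>m\<in>Poly_Mapping.keys F. ?s F m)" by (rule poly_decomp[symmetric])
  define G where "G = (\<Sum>a\<in>Poly_Mapping.keys g. ?s g a)"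
  define H where "H = (\<Sum>b\<in>Poly_Mapping.keys h. ?s h b)"
  define FF where "FF = (\<Sum>m\<in>Poly_Mapping.keys F. ?s F m)"
  define X where "X = (\<Sum>a\<in>Poly_Mapping.keys g. \<Sum>b\<in>Poly_Mapping.keys h.
      Poly_Mapping.single (a + b) (Poly_Mapping.lookup g a * Poly_Mapping.lookup h b))"
  have Gg: "G = g" and Hh: "H = h" and FFF: "FF = F" unfolding G_def H_def FF_def by (rule poly_decomp)+
  have "g * h = G * H" by (simp only: Gg Hh)
  also have "\<dots> = X"
    unfolding G_def H_def X_def by (simp add: sum_product mult_single)
  finally have egh: "g * h = X" .
  have "(g * h) \<circ>\<^sub>D F = X \<circ>\<^sub>D FF" by (simp only: egh FFF)
  also have "\<dots> = (\<Sum>a\<in>Poly_Mapping.keys g. \<Sum>b\<in>Poly_Mapping.keys h.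
      Poly_Mapping.single (a + b) (Poly_Mapping.lookup g a * Poly_Mapping.lookup h b) \<circ>\<^sub>D FF)"
    by (simp only: X_def contract_sum_left)
  also have "\<dots> = (\<Sum>a\<in>Poly_Mapping.keys g. \<Sum>b\<in>Poly_Mapping.keys h. \<Sum>m\<in>Poly_Mapping.keys F.
      Poly_Mapping.single (a + b) (Poly_Mapping.lookup g a * Poly_Mapping.lookup h b) \<circ>\<^sub>D ?s F m)"
    by (simp only: FF_def contract_sum_right)
  also have "\<dots> = (\<Sum>a\<in>Poly_Mapping.keys g. \<Sum>b\<in>Poly_Mapping.keys h. \<Sum>m\<in>Poly_Mapping.keys F.
      ?s g a \<circ>\<^sub>D (?s h b \<circ>\<^sub>D ?s F m))"
    by (simp add: contract_single_assoc)
  also have "\<dots> = (\<Sum>a\<in>Poly_Mapping.keys g. ?s g a \<circ>\<^sub>D (\<Sum>b\<in>Poly_Mapping.keys h. ?s h b \<circ>\<^sub>D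
       (\<Sum>m\<in>Poly_Mapping.keys F. ?s F m)))"
    by (simp only: contract_sum_right)
  also have "\<dots> = G \<circ>\<^sub>D (H \<circ>\<^sub>D FF)"
    by (simp only: G_def H_def FF_def contract_sum_left)
  also have "\<dots> = g \<circ>\<^sub>D (h \<circ>\<^sub>D F)" by (simp only: Gg Hh FFF)
  finally show ?thesis .
qed

lemma mon_le_0[simp]: "mon_le 0 b" by (simp add: mon_le_def)

lemma dcn_0[simp]: "dcn 0 b = 1" by (simp add: dcn_def)

lemma contract_single0: "Poly_Mapping.single 0 c \<circ>\<^sub>D H = smult_mp c (H :: ('a::comm_semiring_1) mpoly)"
proof -
  let ?s = "\<lambda>m. Poly_Mapping.single m (Poly_Mapping.lookup H m)"
  have "Poly_Mapping.single 0 c \<circ>\<^sub>D H = Poly_Mapping.single 0 c \<circ>\<^sub>D (\<Sum>m\<in>Poly_Mapping.keys H. ?s m)"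
    by (simp only: poly_decomp)
  also have "\<dots> = (\<Sum>m\<in>Poly_Mapping.keys H. Poly_Mapping.single 0 c * ?s m)"
    by (simp add: contract_sum_right contract_single diff_coeff_dcn mult_single)
  also have "\<dots> = Poly_Mapping.single 0 c * (\<Sum>m\<in>Poly_Mapping.keys H. ?s m)"
    by (simp add: sum_distrib_left)
  also have "\<dots> = smult_mp c H" by (simp only: poly_decomp smult_mp_eq)
  finally show ?thesis .
qed

lemma contract_one: "1 \<circ>\<^sub>D H = (H :: ('a::comm_semiring_1) mpoly)"
  using contract_single0[of 1 H] by (simp add: smult_mp_eq)

lemma contract_smult_left: "smult_mp c g \<circ>\<^sub>D F = smult_mp c (g \<circ>\<^sub>D (F :: ('a::comm_semiring_1) mpoly))"
  by (simp add: smult_mp_eq[of c g] contract_assoc contract_single0)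

lemma contract_smult_right: "g \<circ>\<^sub>D smult_mp c F = smult_mp c (g \<circ>\<^sub>D (F :: ('a::comm_semiring_1) mpoly))"
proof -
  have "g \<circ>\<^sub>D smult_mp c F = g \<circ>\<^sub>D (Poly_Mapping.single 0 c \<circ>\<^sub>D F)" by (simp add: contract_single0)
  also have "\<dots> = (Poly_Mapping.single 0 c * g) \<circ>\<^sub>D F" by (simp add: contract_assoc mult.commute)
  also have "\<dots> = smult_mp c (g \<circ>\<^sub>D F)" by (simp add: contract_assoc contract_single0)
  finally show ?thesis .
qed

lemma contract_diff_left: "(p - q) \<circ>\<^sub>D G = p \<circ>\<^sub>D G - q \<circ>\<^sub>D (G :: ('a::comm_ring_1) mpoly)"
proof -
  have "p \<circ>\<^sub>D G = ((p - q) + q) \<circ>\<^sub>D G" by simp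
  also have "\<dots> = (p - q) \<circ>\<^sub>D G + q \<circ>\<^sub>D G" by (rule contract_add_left)
  finally show ?thesis by (simp add: eq_diff_eq)
qed

lemma contract_diff_right: "g \<circ>\<^sub>D (F1 - F2) = g \<circ>\<^sub>D F1 - g \<circ>\<^sub>D (F2 :: ('a::comm_ring_1) mpoly)"
proof -
  have "g \<circ>\<^sub>D F1 = g \<circ>\<^sub>D ((F1 - F2) + F2)" by simp
  also have "\<dots> = g \<circ>\<^sub>D (F1 - F2) + g \<circ>\<^sub>D F2" by (rule contract_add_right)
  finally show ?thesis by (simp add: eq_diff_eq)
qed

lemma contract_comb:
  "(\<Sum>j\<in>J. smult_mp (c j) (B j)) \<circ>\<^sub>D G = (\<Sum>j\<in>J. smult_mp (c j) (B j \<circ>\<^sub>D (G :: ('a::comm_semiring_1) mpoly)))"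
  unfolding contract_sum_left by (rule sum.cong[OF refl]) (rule contract_smult_left)

lemma polys_iff: "p \<in> polys n \<longleftrightarrow> (\<forall>m\<in>Poly_Mapping.keys p. Poly_Mapping.keys m \<subseteq> {..<n})"
  by (simp add: polys_def poly_in_def)

lemma polys_keys_sub: "Poly_Mapping.keys p \<subseteq> Poly_Mapping.keys q \<union> Poly_Mapping.keys r \<Longrightarrow> q \<in> polys n \<Longrightarrow> r \<in> polys n \<Longrightarrow> p \<in> polys n"
  unfolding polys_iff by blast

lemma polys_0[simp]: "0 \<in> polys n" by (simp add: polys_iff)

lemma polys_1[simp]: "(1 :: ('a::comm_semiring_1) mpoly) \<in> polys n" by (simp add: polys_iff)

lemma polys_add: "p \<in> polys n \<Longrightarrow> q \<in> polys n \<Longrightarrow> p + q \<in> polys n"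
  by (rule polys_keys_sub[OF Poly_Mapping.keys_add])

lemma polys_diff: "p \<in> polys n \<Longrightarrow> q \<in> polys n \<Longrightarrow> p - q \<in> polys n"
  by (rule polys_keys_sub[of _ p q]) (auto simp: in_keys_iff lookup_minus)

lemma polys_mult: "p \<in> polys n \<Longrightarrow> q \<in> polys n \<Longrightarrow> p * q \<in> polys (n::nat)"
proof -
  assume p: "p \<in> polys n" and q: "q \<in> polys n"
  show ?thesis unfolding polys_iff
  proof
    fix m assume "m \<in> Poly_Mapping.keys (p * q)"
    then obtain a b where ab: "a \<in> Poly_Mapping.keys p" "b \<in> Poly_Mapping.keys q" "m = a + b"
      using Poly_Mapping.keys_mult[of p q] by blast
    have "Poly_Mapping.keys m \<subseteq> Poly_Mapping.keys a \<union> Poly_Mapping.keys b"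
      using ab(3) Poly_Mapping.keys_add[of a b] by simp
    thus "Poly_Mapping.keys m \<subseteq> {..<n}" using ab p q by (auto simp: polys_iff)
  qed
qed

lemma polys_pow: "(p :: ('a::comm_semiring_1) mpoly) \<in> polys n \<Longrightarrow> p ^ k \<in> polys n"
  by (induction k) (simp_all add: polys_mult)

lemma polys_single0: "Poly_Mapping.single 0 c \<in> polys n"
  by (simp add: polys_iff)

lemma polys_smult: "p \<in> polys n \<Longrightarrow> smult_mp c p \<in> polys n"
  by (simp add: smult_mp_eq polys_mult polys_single0)

lemma polys_sum: "(\<And>j. j \<in> J \<Longrightarrow> f j \<in> polys n) \<Longrightarrow> sum f J \<in> polys n"
  by (induction J rule: infinite_finite_induct) (simp_all add: polys_add)

lemma polys_subspace: "mp.subspace (polys n :: ('a::field) mpoly set)"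
  unfolding mp.subspace_def by (simp add: polys_add polys_smult)

lemma mdeg_superset: "finite K \<Longrightarrow> Poly_Mapping.keys m \<subseteq> K \<Longrightarrow> mdeg m = (\<Sum>i\<in>K. Poly_Mapping.lookup m i)"
  unfolding mdeg_def by (rule sum.mono_neutral_right[symmetric]) (auto simp: not_in_keys_iff_lookup_eq_zero)

lemma mdeg_add: "mdeg (a + b) = mdeg a + mdeg b"
proof -
  let ?K = "Poly_Mapping.keys a \<union> Poly_Mapping.keys b"
  have "mdeg (a + b) = (\<Sum>i\<in>?K. Poly_Mapping.lookup (a + b) i)"
    by (rule mdeg_superset) (use Poly_Mapping.keys_add[of a b] in auto)
  moreover have "mdeg a = (\<Sum>i\<in>?K. Poly_Mapping.lookup a i)" by (rule mdeg_superset) auto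
  moreover have "mdeg b = (\<Sum>i\<in>?K. Poly_Mapping.lookup b i)" by (rule mdeg_superset) auto
  ultimately show ?thesis by (simp add: lookup_add sum.distrib)
qed

lemma mdeg_mono: "mon_le a b \<Longrightarrow> mdeg a \<le> mdeg b"
proof -
  assume le: "mon_le a b"
  let ?K = "Poly_Mapping.keys a \<union> Poly_Mapping.keys b"
  have "mdeg a = (\<Sum>i\<in>?K. Poly_Mapping.lookup a i)" by (rule mdeg_superset) auto
  also have "\<dots> \<le> (\<Sum>i\<in>?K. Poly_Mapping.lookup b i)"
    by (rule sum_mono) (use le in \<open>simp add: mon_le_def\<close>)
  also have "\<dots> = mdeg b" by (rule mdeg_superset[symmetric]) auto
  finally show ?thesis .
qed

lemma homogeneous_mult: "homogeneous i p \<Longrightarrow> homogeneous j q \<Longrightarrow> homogeneous (i + j) (p * q)"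
  unfolding homogeneous_def
proof
  fix m assume p: "\<forall>m\<in>Poly_Mapping.keys p. mdeg m = i" and q: "\<forall>m\<in>Poly_Mapping.keys q. mdeg m = j"
    and m: "m \<in> Poly_Mapping.keys (p * q)"
  then obtain a b where ab: "a \<in> Poly_Mapping.keys p" "b \<in> Poly_Mapping.keys q" "m = a + b"
    using Poly_Mapping.keys_mult[of p q] by blast
  show "mdeg m = i + j" using ab p q by (simp add: mdeg_add)
qed

lemma homogeneous_pow: "homogeneous 1 l \<Longrightarrow> homogeneous k (l ^ k)"
proof (induction k)
  case 0 thus ?case by (simp add: homogeneous_def mdeg_def)
next
  case (Suc k)
  thus ?case using homogeneous_mult[of 1 l k "l^k"] by simp
qed

lemma contract_deg_vanish:
  assumes "homogeneous i g" "homogeneous j F" "j < i"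
  shows "g \<circ>\<^sub>D F = (0 :: ('a::comm_semiring_1) mpoly)"
  unfolding contract_cterm
proof (intro sum.neutral ballI)
  fix a b assume a: "a \<in> Poly_Mapping.keys g" and b: "b \<in> Poly_Mapping.keys F"
  have "\<not> mon_le a b" using mdeg_mono[of a b] assms a b by (auto simp: homogeneous_def)
  thus "cterm g F a b = 0" by (simp add: cterm_def)
qed

section \<open>Finite dimensionality\<close>

lemma finite_mon_below: "finite {m. mon_le m b}"
proof -
  let ?S = "{f. \<forall>x. (x \<in> Poly_Mapping.keys b \<longrightarrow> f x \<in> {..mdeg b}) \<and> (x \<notin> Poly_Mapping.keys b \<longrightarrow> f x = (0::nat))}"
  have sub: "Poly_Mapping.lookup ` {m. mon_le m b} \<subseteq> ?S"
  proof
    fix f assume "f \<in> Poly_Mapping.lookup ` {m. mon_le m b}"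
    then obtain m where m: "mon_le m b" "f = Poly_Mapping.lookup m" by blast
    have "f x \<le> mdeg b" if x: "x \<in> Poly_Mapping.keys b" for x
    proof -
      have h1: "Poly_Mapping.lookup m x \<le> Poly_Mapping.lookup b x" using m(1) by (simp add: mon_le_def)
      have h2: "Poly_Mapping.lookup b x \<le> mdeg b" unfolding mdeg_def by (rule member_le_sum) (use x in auto)
      show ?thesis using le_trans[OF h1 h2] m(2) by simp
    qed
    moreover have "f x = 0" if x: "x \<notin> Poly_Mapping.keys b" for x
    proof -
      have "Poly_Mapping.lookup m x \<le> Poly_Mapping.lookup b x" using m(1) by (simp add: mon_le_def)
      thus ?thesis using x m(2) by (simp add: not_in_keys_iff_lookup_eq_zero)
    qed
    ultimately show "f \<in> ?S" by (simp only: mem_Collect_eq atMost_iff) blast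
  qed
  have "finite ?S" by (rule finite_set_of_finite_funs) auto
  hence "finite (Poly_Mapping.lookup ` {m. mon_le m b})" using sub by (rule finite_subset[rotated])
  moreover have "inj_on Poly_Mapping.lookup {m. mon_le m b}"
    by (rule inj_onI, rule poly_mapping_eqI) simp
  ultimately show ?thesis by (rule finite_imageD)
qed

definition Mset :: "('a::zero) mpoly \<Rightarrow> (nat \<Rightarrow>\<^sub>0 nat) set" where
  "Mset F = (\<Union>b\<in>Poly_Mapping.keys F. {m. mon_le m b})"

lemma finite_Mset: "finite (Mset F)"
  unfolding Mset_def by (auto intro: finite_mon_below)

lemma mon_le_minus: "mon_le (b - a) b"
  by (simp add: mon_le_def lookup_minus_nat)

lemma keys_contract: "Poly_Mapping.keys (g \<circ>\<^sub>D F) \<subseteq> Mset F"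
  unfolding contract_cterm
proof (rule subset_trans[OF Poly_Mapping.keys_sum], rule UN_least)
  fix a assume a: "a \<in> Poly_Mapping.keys g"
  show "Poly_Mapping.keys (\<Sum>b\<in>Poly_Mapping.keys F. cterm g F a b) \<subseteq> Mset F"
  proof (rule subset_trans[OF Poly_Mapping.keys_sum], rule UN_least)
    fix b assume b: "b \<in> Poly_Mapping.keys F"
    have "b - a \<in> Mset F" unfolding Mset_def using b mon_le_minus[of b a] by blast
    thus "Poly_Mapping.keys (cterm g F a b) \<subseteq> Mset F" by (simp add: cterm_def)
  qed
qed

lemma span_Mset:
  assumes "Poly_Mapping.keys (p :: ('a::field) mpoly) \<subseteq> M"
  shows "p \<in> mp.span ((\<lambda>m. Poly_Mapping.single m 1) ` M)"
proof -
  have "p = (\<Sum>k\<in>Poly_Mapping.keys p. smult_mp (Poly_Mapping.lookup p k) (Poly_Mapping.single k 1))"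
  proof -
    have "(\<Sum>k\<in>Poly_Mapping.keys p. smult_mp (Poly_Mapping.lookup p k) (Poly_Mapping.single k 1))
        = (\<Sum>k\<in>Poly_Mapping.keys p. Poly_Mapping.single k (Poly_Mapping.lookup p k))"
      by (rule sum.cong) (simp_all add: smult_mp_def)
    thus ?thesis by (simp only: poly_decomp)
  qed
  also have "\<dots> \<in> mp.span ((\<lambda>m. Poly_Mapping.single m 1) ` M)"
    by (rule mp.span_sum, rule mp.span_scale, rule mp.span_base) (use assms in auto)
  finally show ?thesis .
qed

lemma contract_image_fin:
  "(\<lambda>g. g \<circ>\<^sub>D F) ` A \<subseteq> mp.span ((\<lambda>m. Poly_Mapping.single m 1) ` Mset (F :: ('a::field) mpoly))"
proof
  fix y assume "y \<in> (\<lambda>g. g \<circ>\<^sub>D F) ` A"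
  then obtain g where "y = g \<circ>\<^sub>D F" by (rule imageE)
  thus "y \<in> mp.span ((\<lambda>m. Poly_Mapping.single m 1) ` Mset F)" using span_Mset[OF keys_contract[of g F]] by (simp only:)
qed

lemma basis_mod_to_fbasis:
  fixes G :: "('a::field) mpoly"
  assumes "basis_mod (polys n) (Ann n G) B J"
  shows "mp.fbasis ((\<lambda>g. g \<circ>\<^sub>D G) ` polys n) (\<lambda>j. B j \<circ>\<^sub>D G) J"
proof -
  have fin: "finite J" and BV: "B ` J \<subseteq> polys n"
    and ind: "\<And>c. (\<Sum>j\<in>J. smult_mp (c j) (B j)) \<in> Ann n G \<Longrightarrow> (\<forall>j\<in>J. c j = 0)"
    and sp: "\<And>p. p \<in> polys n \<Longrightarrow> \<exists>c. p - (\<Sum>j\<in>J. smult_mp (c j) (B j)) \<in> Ann n G"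
    using assms unfolding basis_mod_def by blast+
  have comb: "(\<Sum>j\<in>J. smult_mp (c j) (B j)) \<in> polys n" for c
    using BV by (intro polys_sum polys_smult) auto
  show ?thesis
    unfolding mp.fbasis_def
  proof (intro conjI)
    show "finite J" by (rule fin)
    show "(\<lambda>j. B j \<circ>\<^sub>D G) ` J \<subseteq> (\<lambda>g. g \<circ>\<^sub>D G) ` polys n" using BV by auto
    show "mp.fam_indep (\<lambda>j. B j \<circ>\<^sub>D G) J"
      unfolding mp.fam_indep_def
    proof (intro allI impI)
      fix c assume "(\<Sum>j\<in>J. smult_mp (c j) (B j \<circ>\<^sub>D G)) = 0"
      hence "(\<Sum>j\<in>J. smult_mp (c j) (B j)) \<circ>\<^sub>D G = 0" by (simp add: contract_comb)
      hence "(\<Sum>j\<in>J. smult_mp (c j) (B j)) \<in> Ann n G" using comb by (simp add: Ann_def)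
      thus "\<forall>j\<in>J. c j = 0" by (rule ind)
    qed
    show "(\<lambda>g. g \<circ>\<^sub>D G) ` polys n \<subseteq> mp.span ((\<lambda>j. B j \<circ>\<^sub>D G) ` J)"
    proof
      fix y assume "y \<in> (\<lambda>g. g \<circ>\<^sub>D G) ` polys n"
      then obtain p where p: "p \<in> polys n" "y = p \<circ>\<^sub>D G" by blast
      obtain c where "p - (\<Sum>j\<in>J. smult_mp (c j) (B j)) \<in> Ann n G" using sp[OF p(1)] by blast
      hence "(p - (\<Sum>j\<in>J. smult_mp (c j) (B j))) \<circ>\<^sub>D G = 0" by (simp add: Ann_def)
      hence "y = (\<Sum>j\<in>J. smult_mp (c j) (B j \<circ>\<^sub>D G))" using p(2) by (simp add: contract_diff_left contract_comb)
      also have "\<dots> \<in> mp.span ((\<lambda>j. B j \<circ>\<^sub>D G) ` J)"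
        by (rule mp.span_sum, rule mp.span_scale, rule mp.span_base) auto
      finally show "y \<in> mp.span ((\<lambda>j. B j \<circ>\<^sub>D G) ` J)" .
    qed
  qed
qed

lemma fbasis_to_basis_mod:
  fixes G :: "('a::field) mpoly"
  assumes BV: "B ` J \<subseteq> polys n" and fb: "mp.fbasis ((\<lambda>g. g \<circ>\<^sub>D G) ` polys n) (\<lambda>j. B j \<circ>\<^sub>D G) J"
  shows "basis_mod (polys n) (Ann n G) B J"
proof -
  have fin: "finite J" and ind: "mp.fam_indep (\<lambda>j. B j \<circ>\<^sub>D G) J"
    and spn: "(\<lambda>g. g \<circ>\<^sub>D G) ` polys n \<subseteq> mp.span ((\<lambda>j. B j \<circ>\<^sub>D G) ` J)"
    using fb unfolding mp.fbasis_def by blast+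
  have comb: "(\<Sum>j\<in>J. smult_mp (c j) (B j)) \<in> polys n" for c
    using BV by (intro polys_sum polys_smult) auto
  have inj: "inj_on (\<lambda>j. B j \<circ>\<^sub>D G) J" by (rule mp.fam_indep_inj[OF fin ind])
  show ?thesis
    unfolding basis_mod_def
  proof (intro conjI allI impI ballI)
    show "finite J" by (rule fin)
    show "B ` J \<subseteq> polys n" by (rule BV)
    fix c j assume "(\<Sum>j\<in>J. smult_mp (c j) (B j)) \<in> Ann n G" and j: "j \<in> J"
    hence "(\<Sum>j\<in>J. smult_mp (c j) (B j \<circ>\<^sub>D G)) = 0" by (simp add: Ann_def contract_comb)
    thus "c j = 0" using mp.fam_indepD[OF ind _ j] by blast
  next
    fix p :: "'a mpoly" assume p: "p \<in> polys n"
    have "p \<circ>\<^sub>D G \<in> mp.span ((\<lambda>j. B j \<circ>\<^sub>D G) ` J)" using spn p by blast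
    then obtain c where c: "p \<circ>\<^sub>D G = (\<Sum>j\<in>J. smult_mp (c j) (B j \<circ>\<^sub>D G))"
      using mp.span_fam_coeffs[OF fin inj] by blast
    have "(p - (\<Sum>j\<in>J. smult_mp (c j) (B j))) \<circ>\<^sub>D G = 0"
      using c by (simp add: contract_diff_left contract_comb)
    moreover have "p - (\<Sum>j\<in>J. smult_mp (c j) (B j)) \<in> polys n" using p comb by (rule polys_diff)
    ultimately show "\<exists>c. p - (\<Sum>j\<in>J. smult_mp (c j) (B j)) \<in> Ann n G"
      by (auto simp: Ann_def)
  qed
qed

lemma qdim_eq:
  fixes G :: "('a::field) mpoly"
  assumes finT: "finite T" and WT: "(\<lambda>g. g \<circ>\<^sub>D G) ` polys n \<subseteq> mp.span T"
  shows "qdim (polys n) (Ann n G) = mp.dim ((\<lambda>g. g \<circ>\<^sub>D G) ` polys n)"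
proof -
  define W where "W = (\<lambda>g. g \<circ>\<^sub>D G) ` polys n"
  obtain Bs where Bs: "Bs \<subseteq> W" "mp.independent Bs" "W \<subseteq> mp.span Bs" "card Bs = mp.dim W"
    using mp.basis_exists by blast
  have finBs: "finite Bs" using mp.independent_span_bound[OF finT Bs(2)] Bs(1) WT W_def by blast
  obtain e where e: "bij_betw e {..<card Bs} Bs"
    using ex_bij_betw_nat_finite[OF finBs] by (auto simp: atLeast0LessThan)
  have "\<forall>b. \<exists>g. b \<in> Bs \<longrightarrow> g \<in> polys n \<and> g \<circ>\<^sub>D G = b" using Bs(1) W_def by blast
  from choice[OF this] obtain pre where pre: "\<And>b. b \<in> Bs \<Longrightarrow> pre b \<in> polys n \<and> pre b \<circ>\<^sub>D G = b" by blast
  define m where "m = mp.dim W"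
  define B where "B j = pre (e j)" for j
  have eB: "B j \<circ>\<^sub>D G = e j" if "j < m" for j
    using pre[of "e j"] e that Bs(4) by (auto simp: B_def m_def bij_betw_def)
  have BV: "B ` {..<m} \<subseteq> polys n"
    using pre e Bs(4) by (auto simp: B_def m_def bij_betw_def)
  have fbe: "mp.fbasis W e {..<m}"
    unfolding mp.fbasis_def
  proof (intro conjI)
    show "finite {..<m}" by simp
    show "e ` {..<m} \<subseteq> W" using e Bs(1,4) by (auto simp: m_def bij_betw_def)
    show "mp.fam_indep e {..<m}"
      by (rule mp.independent_fam_indep) (use e Bs(2,4) in \<open>auto simp: m_def bij_betw_def\<close>)
    show "W \<subseteq> mp.span (e ` {..<m})" using e Bs(3,4) by (auto simp: m_def bij_betw_def)
  qed
  have fbB: "mp.fbasis W (\<lambda>j. B j \<circ>\<^sub>D G) {..<m}"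
    by (rule mp.fbasis_cong[OF fbe]) (simp add: eB)
  have ex: "basis_mod (polys n) (Ann n G) B {..<m}"
    by (rule fbasis_to_basis_mod[OF BV]) (use fbB W_def in simp)
  have uniq: "m' = m" if "basis_mod (polys n) (Ann n G) B' {..<m'}" for B' :: "nat \<Rightarrow> 'a mpoly" and m'
  proof -
    have "mp.fbasis W (\<lambda>j. B' j \<circ>\<^sub>D G) {..<m'}"
      using basis_mod_to_fbasis[OF that] W_def by simp
    from mp.fbasis_dim[OF this] show ?thesis by (simp add: m_def)
  qed
  have "qdim (polys n) (Ann n G) = m"
    unfolding qdim_def
  proof (rule the_equality)
    show "\<exists>B :: nat \<Rightarrow> 'a mpoly. basis_mod (polys n) (Ann n G) B {..<m}" using ex by blast
    show "\<And>m'. \<exists>B :: nat \<Rightarrow> 'a mpoly. basis_mod (polys n) (Ann n G) B {..<m'} \<Longrightarrow> m' = m"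
      using uniq by blast
  qed
  thus ?thesis by (simp add: m_def W_def)
qed

theorem proposition3p14:
  fixes F l :: "'a::field_char_0 mpoly" and n d :: nat
  assumes "n \<ge> 2" and "d \<ge> 2"
    and "F \<in> polys n" and "F \<noteq> 0" and "homogeneous d F"
    and "l \<in> polys n" and "homogeneous 1 l"
  defines "nn \<equiv> (\<lambda>i. int (dimA n d F l i) + int (dimA n d F l (i + 2)) - 2 * int (dimA n d F l (i + 1)))"
  shows "(\<forall>i\<le>d. nn i \<ge> 0) \<and>
         jordan_type (polys n) (Ann n F) l = (\<Sum>i\<in>{0..d}. replicate_mset (nat (nn i)) (i + 1))"
proof -
  note homF = assms(5) and lV = assms(6) and homl = assms(7)
  define V where "V = (polys n :: 'a mpoly set)"
  define W where "W = (\<lambda>g. g \<circ>\<^sub>D F) ` V"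
  define L where "L = (\<lambda>x. l \<circ>\<^sub>D x)"
  interpret nl: nilp "smult_mp :: 'a \<Rightarrow> 'a mpoly \<Rightarrow> 'a mpoly" L
  proof (rule nilp.intro[OF mp.vector_space_axioms])
    show "nilp_axioms smult_mp L"
      by unfold_locales (simp_all add: L_def contract_add_right contract_smult_right)
  qed
  have Lpow: "(L^^t) x = l ^ t \<circ>\<^sub>D x" for t x
    by (induction t) (simp_all add: L_def contract_one contract_assoc)
  have Lcomm: "(L^^t) (g \<circ>\<^sub>D F) = g \<circ>\<^sub>D (l ^ t \<circ>\<^sub>D F)" for t g
    by (simp add: Lpow contract_assoc[symmetric] mult.commute)
  define T where "T = (\<lambda>m. Poly_Mapping.single m (1::'a)) ` Mset F"
  have finT: "finite T" by (simp add: T_def finite_Mset)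
  have WT: "W \<subseteq> mp.span T" unfolding T_def W_def by (rule contract_image_fin)
  have homphi: "module_hom smult_mp smult_mp (\<lambda>g. g \<circ>\<^sub>D F)"
    using mp.module_axioms by (simp add: module_hom_iff contract_add_left contract_smult_left)
  have sW: "mp.subspace W" unfolding W_def V_def
    by (rule module_hom.subspace_image[OF homphi polys_subspace])
  have invW: "L ` W \<subseteq> W"
  proof
    fix y assume "y \<in> L ` W"
    then obtain g where g: "g \<in> V" "y = l \<circ>\<^sub>D (g \<circ>\<^sub>D F)" by (auto simp: W_def L_def)
    hence "y = (l * g) \<circ>\<^sub>D F" by (simp add: contract_assoc)
    moreover have "l * g \<in> V" using g lV by (simp add: V_def polys_mult)
    ultimately show "y \<in> W" by (auto simp: W_def)
  qed
  have img: "(\<lambda>g. g \<circ>\<^sub>D (l ^ i \<circ>\<^sub>D F)) ` V = (L^^i) ` W" for i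
    unfolding W_def image_image Lcomm ..
  have vanish: "(L^^i) ` W \<subseteq> {0}" if "d < i" for i
  proof -
    have "l ^ i \<circ>\<^sub>D F = 0"
      by (rule contract_deg_vanish[OF homogeneous_pow[OF homl] homF that])
    thus ?thesis by (auto simp: W_def Lcomm)
  qed
  have dimA_eq: "dimA n d F l i = mp.dim ((L^^i) ` W)" for i
  proof (cases "i \<le> d")
    case True
    have "(L^^i) ` W \<subseteq> mp.span ((L^^i) ` T)"
      by (rule module_hom.spans_image[OF nl.homk WT])
    hence "qdim V (Ann n (l ^ i \<circ>\<^sub>D F)) = mp.dim ((L^^i) ` W)"
      using qdim_eq[of "(L^^i) ` T" "l ^ i \<circ>\<^sub>D F" n] finT img by (simp add: V_def)
    thus ?thesis using True by (simp add: dimA_def V_def)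
  next
    case False
    have "mp.dim ((L^^i) ` W) = 0"
      by (rule mp.dim_unique[of "{}"]) (use vanish[of i] False mp.independent_empty in auto)
    thus ?thesis using False by (simp add: dimA_def)
  qed
  have nilW: "\<forall>x\<in>W. (L^^(Suc d)) x = 0" using vanish[of "Suc d"] by auto
  obtain jsA where jsA: "nl.jstr W jsA"
    using nl.jstr_exists[OF sW invW finT WT nilW] by blast
  define M where "M = mset (map snd jsA)"
  have cnt: "nn i = int (count M (i+1))" for i
    using conjunct1[OF nl.jstr_mset[OF jsA nilW]] by (simp add: nn_def dimA_eq M_def)
  have E2: "M = (\<Sum>i\<in>{0..d}. replicate_mset (count M (i+1)) (i+1))"
    unfolding M_def by (rule conjunct2[OF nl.jstr_mset[OF jsA nilW]])
  have RHS: "(\<Sum>i\<in>{0..d}. replicate_mset (nat (nn i)) (i + 1)) = M"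
  proof -
    have "(\<Sum>i\<in>{0..d}. replicate_mset (nat (nn i)) (i + 1)) = (\<Sum>i\<in>{0..d}. replicate_mset (count M (i+1)) (i+1))"
      by (rule sum.cong) (simp_all add: cnt)
    also have "\<dots> = M" by (rule E2[symmetric])
    finally show ?thesis .
  qed
  define Q where "Q js \<longleftrightarrow> (\<forall>(v, k)\<in>set js. 1 \<le> k \<and> l ^ k * v \<in> Ann n F) \<and>
       basis_mod (polys n) (Ann n F) (\<lambda>(j, t). l ^ t * fst (js ! j)) {(j, t). j < length js \<and> t < snd (js ! j)}"
    for js :: "('a mpoly \<times> nat) list"
  define tr where "tr js = map (\<lambda>(v, k). (v \<circ>\<^sub>D F, k)) js" for js :: "('a mpoly \<times> nat) list"
  have tr_idx: "nl.idx (tr js) = {(j, t). j < length js \<and> t < snd (js ! j)}" for js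
    by (auto simp: nl.idx_mem tr_def case_prod_beta)
  have tr_fam: "nl.fam (tr js) (j,t) = (l ^ t * fst (js ! j)) \<circ>\<^sub>D F" if "j < length js" for js j t
    using that by (simp add: nl.fam_app tr_def case_prod_beta Lpow contract_assoc)
  have Q_jstr: "nl.jstr W (tr js)" if "Q js" for js
  proof -
    let ?J = "{(j, t). j < length js \<and> t < snd (js ! j)}"
    have bm: "basis_mod (polys n) (Ann n F) (\<lambda>(j, t). l ^ t * fst (js ! j)) ?J"
      using that by (simp add: Q_def)
    have fb: "mp.fbasis W (\<lambda>jt. (case jt of (j, t) \<Rightarrow> l ^ t * fst (js ! j)) \<circ>\<^sub>D F) ?J"
      using basis_mod_to_fbasis[OF bm] by (simp add: W_def V_def)
    have fb2: "mp.fbasis W (nl.fam (tr js)) (nl.idx (tr js))"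
      unfolding tr_idx by (rule mp.fbasis_cong[OF fb]) (auto simp: tr_fam)
    have kill: "\<forall>(w, k)\<in>set (tr js). 1 \<le> k \<and> (L^^k) w = 0"
    proof
      fix wk assume "wk \<in> set (tr js)"
      then obtain v k where vk: "(v, k) \<in> set js" "wk = (v \<circ>\<^sub>D F, k)" by (auto simp: tr_def)
      hence "1 \<le> k" "l ^ k * v \<in> Ann n F" using that by (auto simp: Q_def)
      thus "case wk of (w, k) \<Rightarrow> 1 \<le> k \<and> (L^^k) w = 0"
        using vk by (simp add: Ann_def Lpow contract_assoc)
    qed
    show ?thesis using fb2 kill by (simp add: nl.jstr_def)
  qed
  have Q_mset: "mset (map snd js) = M" if "Q js" for js
  proof -
    have j: "nl.jstr W (tr js)" by (rule Q_jstr[OF that])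
    define M2 where "M2 = mset (map snd (tr js))"
    have M2: "M2 = mset (map snd js)" by (simp add: M2_def tr_def case_prod_beta comp_def)
    have "int (count M2 (i+1)) = int (count M (i+1))" for i
      using conjunct1[OF nl.jstr_mset[OF j nilW]] cnt by (simp add: nn_def dimA_eq M2_def)
    hence c2: "count M2 (i+1) = count M (i+1)" for i by simp
    have "M2 = (\<Sum>i\<in>{0..d}. replicate_mset (count M2 (i+1)) (i+1))"
      unfolding M2_def by (rule conjunct2[OF nl.jstr_mset[OF j nilW]])
    also have "\<dots> = (\<Sum>i\<in>{0..d}. replicate_mset (count M (i+1)) (i+1))"
      by (simp only: c2)
    also have "\<dots> = M" by (rule E2[symmetric])
    finally have "M2 = M" .
    thus ?thesis using M2 by simp
  qed
  have fstW: "fst (jsA ! j) \<in> W" if "j < length jsA" for j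
  proof -
    have "(j, 0) \<in> nl.idx jsA" using nl.jstr_kill[OF jsA that] that by (simp add: nl.idx_mem)
    thus ?thesis using jsA by (auto simp: nl.jstr_def mp.fbasis_def nl.fam_app)
  qed
  have "\<forall>w. \<exists>v. w \<in> W \<longrightarrow> v \<in> V \<and> v \<circ>\<^sub>D F = w" by (auto simp: W_def)
  from choice[OF this] obtain pre where pre: "\<And>w. w \<in> W \<Longrightarrow> pre w \<in> V \<and> pre w \<circ>\<^sub>D F = w" by blast
  define js where "js = map (\<lambda>(w, k). (pre w, k)) jsA"
  have len: "length js = length jsA" by (simp add: js_def)
  have js_nth: "js ! j = (pre (fst (jsA ! j)), snd (jsA ! j))" if "j < length jsA" for j
    using that by (simp add: js_def case_prod_beta)
  have trjs: "tr js = jsA"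
  proof (rule nth_equalityI)
    show "length (tr js) = length jsA" by (simp add: tr_def len)
    fix j assume "j < length (tr js)"
    hence j: "j < length jsA" by (simp add: tr_def len)
    show "tr js ! j = jsA ! j"
      using j js_nth[OF j] pre[OF fstW[OF j]] len by (simp add: tr_def case_prod_beta prod_eq_iff)
  qed
  have QJ: "Q js"
    unfolding Q_def
  proof (intro conjI)
    show "\<forall>(v, k)\<in>set js. 1 \<le> k \<and> l ^ k * v \<in> Ann n F"
    proof
      fix vk assume "vk \<in> set js"
      then obtain j where j: "j < length jsA" "vk = js ! j" by (auto simp: in_set_conv_nth len)
      have k: "1 \<le> snd (jsA ! j)" "(L^^(snd (jsA ! j))) (fst (jsA ! j)) = 0"
        using nl.jstr_kill[OF jsA j(1)] by auto
      have pv: "pre (fst (jsA ! j)) \<in> V" "pre (fst (jsA ! j)) \<circ>\<^sub>D F = fst (jsA ! j)"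
        using pre[OF fstW[OF j(1)]] by auto
      have "l ^ snd (jsA ! j) * pre (fst (jsA ! j)) \<in> polys n"
        using pv(1) lV by (simp add: V_def polys_mult polys_pow)
      moreover have "(l ^ snd (jsA ! j) * pre (fst (jsA ! j))) \<circ>\<^sub>D F = 0"
        using k(2) pv(2) by (simp add: contract_assoc Lpow)
      ultimately show "case vk of (v, k) \<Rightarrow> 1 \<le> k \<and> l ^ k * v \<in> Ann n F"
        using j js_nth[OF j(1)] k(1) by (simp add: Ann_def)
    qed
    let ?J = "{(j, t). j < length js \<and> t < snd (js ! j)}"
    have BV: "(\<lambda>(j, t). l ^ t * fst (js ! j)) ` ?J \<subseteq> polys n"
    proof
      fix x assume "x \<in> (\<lambda>(j, t). l ^ t * fst (js ! j)) ` ?J"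
      then obtain j t where jt: "j < length js" "x = l ^ t * fst (js ! j)" by auto
      have "fst (js ! j) \<in> V" using jt(1) js_nth pre fstW len by auto
      thus "x \<in> polys n" using jt lV by (simp add: V_def polys_mult polys_pow)
    qed
    have fbA: "mp.fbasis W (nl.fam (tr js)) (nl.idx (tr js))"
      using jsA trjs by (simp add: nl.jstr_def)
    have "mp.fbasis W (\<lambda>jt. (case jt of (j, t) \<Rightarrow> l ^ t * fst (js ! j)) \<circ>\<^sub>D F) ?J"
      by (rule mp.fbasis_cong[OF fbA[unfolded tr_idx]]) (auto simp: tr_fam)
    thus "basis_mod (polys n) (Ann n F) (\<lambda>(j, t). l ^ t * fst (js ! j)) ?J"
      by (intro fbasis_to_basis_mod[OF BV]) (simp add: W_def V_def)
  qed
  have JT: "jordan_type (polys n) (Ann n F) l = M"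
    unfolding jordan_type_def
  proof (rule the_equality)
    show "\<exists>js. M = mset (map snd js) \<and>
       (\<forall>(v, k)\<in>set js. 1 \<le> k \<and> l ^ k * v \<in> Ann n F) \<and>
       basis_mod (polys n) (Ann n F) (\<lambda>(j, t). l ^ t * fst (js ! j)) {(j, t). j < length js \<and> t < snd (js ! j)}"
      by (rule exI[of _ js]) (use QJ Q_mset[OF QJ] in \<open>simp add: Q_def\<close>)
  next
    fix P assume "\<exists>js. P = mset (map snd js) \<and>
       (\<forall>(v, k)\<in>set js. 1 \<le> k \<and> l ^ k * v \<in> Ann n F) \<and>
       basis_mod (polys n) (Ann n F) (\<lambda>(j, t). l ^ t * fst (js ! j)) {(j, t). j < length js \<and> t < snd (js ! j)}"
    then obtain js2 where "P = mset (map snd js2)" "Q js2" by (auto simp: Q_def)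
    thus "P = M" using Q_mset by simp
  qed
  show ?thesis using cnt JT RHS by simp
qed

end
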